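(* Let $G=(U\cup W,E)$ be a finite bipartite graph with bipartition $(U,W)$ and let $\mathbf{I}^Y\in\{0,1\}^{\vec E}$ be defined by $I^Y_{\vec e}=1$ iff $\lim_{z\to\infty}Y_{\vec e}(z)=\infty$. Then the set $V(\mathbf{I}^Y)$ is a minimum vertex cover of $G$.
   Context: $\vec E$ denotes the directed edges, $\partial v$ the neighbours of $v$, empty sums are $0$. LABP: $m^0_{\vec e}(z)=0$, $m^{t+1}_{u\to v}(z)=z/(1+\sum_{w\in\partial u\setminus v}m^t_{w\to u}(z))$; $Y_{\vec e}(z)=\lim_t m^t_{\vec e}(z)$, which is non-decreasing in $z$. The map $\mathcal{P}_G:\{0,1\}^{\vec E}\to\{0,1\}^{\vec E}$ is $\mathcal{P}_G(\mathbf{I})_{u\to v}=\mathbf{1}(\sum_{w\in\partial u\setminus v}I_{w\to u}=0)$. For $\mathbf{I}\in\{0,1\}^{\vec E}$, the vertex set $V(\mathbf{I})$ is defined by: for $u\in U$, $u\in V(\mathbf{I})$ iff $\sum_{v\in\partial u}I_{v\to u}\ge1$; for $w\in W$, $w\in V(\mathbf{I})$ iff $\sum_{v\in\partial w}\mathcal{P}_G(\mathbf{I})_{v\to w}\ge2$. *)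

theory Defs
  imports Complex_Main
begin

text \<open>A finite bipartite graph with bipartition (U, W) is given by a set E of
  ordered pairs which is symmetric (so E is exactly the set of directed edges
  of the underlying undirected graph) and every edge joins U and W.\<close>

definition bipartite_graph :: "'a set \<Rightarrow> 'a set \<Rightarrow> ('a \<times> 'a) set \<Rightarrow> bool" where
  "bipartite_graph U W E \<longleftrightarrow> finite U \<and> finite W \<and> U \<inter> W = {} \<and>
     (\<forall>u v. (u, v) \<in> E \<longrightarrow> (v, u) \<in> E) \<and>
     (\<forall>u v. (u, v) \<in> E \<longrightarrow> (u \<in> U \<and> v \<in> W) \<or> (u \<in> W \<and> v \<in> U))"

definition nbrs :: "('a \<times> 'a) set \<Rightarrow> 'a \<Rightarrow> 'a set" where
  "nbrs E v = {w. (v, w) \<in> E}"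

fun labp :: "('a \<times> 'a) set \<Rightarrow> nat \<Rightarrow> real \<Rightarrow> 'a \<times> 'a \<Rightarrow> real" where
  "labp E 0 z e = 0"
| "labp E (Suc t) z (u, v) =
     z / (1 + (\<Sum>w\<in>nbrs E u - {v}. labp E t z (w, u)))"

definition Y :: "('a \<times> 'a) set \<Rightarrow> real \<Rightarrow> 'a \<times> 'a \<Rightarrow> real" where
  "Y E z e = lim (\<lambda>t. labp E t z e)"

definition PG :: "('a \<times> 'a) set \<Rightarrow> ('a \<times> 'a \<Rightarrow> nat) \<Rightarrow> 'a \<times> 'a \<Rightarrow> nat" where
  "PG E I e = (if (\<Sum>w\<in>nbrs E (fst e) - {snd e}. I (w, fst e)) = 0 then 1 else 0)"

definition Vset :: "'a set \<Rightarrow> 'a set \<Rightarrow> ('a \<times> 'a) set \<Rightarrow> ('a \<times> 'a \<Rightarrow> nat) \<Rightarrow> 'a set" where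
  "Vset U W E I =
     {u \<in> U. (\<Sum>v\<in>nbrs E u. I (v, u)) \<ge> 1} \<union>
     {w \<in> W. (\<Sum>v\<in>nbrs E w. PG E I (v, w)) \<ge> 2}"

definition IY :: "('a \<times> 'a) set \<Rightarrow> 'a \<times> 'a \<Rightarrow> nat" where
  "IY E e = (if filterlim (\<lambda>z. Y E z e) at_top at_top then 1 else 0)"

definition vertex_cover :: "'a set \<Rightarrow> ('a \<times> 'a) set \<Rightarrow> 'a set \<Rightarrow> bool" where
  "vertex_cover V E S \<longleftrightarrow> S \<subseteq> V \<and> (\<forall>u v. (u, v) \<in> E \<longrightarrow> u \<in> S \<or> v \<in> S)"

definition min_vertex_cover :: "'a set \<Rightarrow> ('a \<times> 'a) set \<Rightarrow> 'a set \<Rightarrow> bool" where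
  "min_vertex_cover V E S \<longleftrightarrow> vertex_cover V E S \<and>
     (\<forall>S'. vertex_cover V E S' \<longrightarrow> card S \<le> card S')"

end

theory Submission
  imports Defs
begin

lemma finite_nbrs: "finite E \<Longrightarrow> finite (nbrs E u)"
  unfolding nbrs_def by (rule finite_subset[of _ "snd ` E"]) force+

lemma labp_nonneg: "z \<ge> 0 \<Longrightarrow> 0 \<le> labp E t z e"
proof (induction t arbitrary: e)
  case 0 then show ?case by simp
next
  case (Suc t)
  obtain u v where e: "e = (u,v)" by (cases e)
  have "0 \<le> (\<Sum>w\<in>nbrs E u - {v}. labp E t z (w, u))" using Suc by (simp add: sum_nonneg)
  then show ?case using Suc.prems e by simp
qed

lemma labp_le: assumes z: "z \<ge> 0" shows "labp E t z e \<le> z"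
proof (cases t)
  case 0 then show ?thesis using z by (simp)
next
  case (Suc s)
  obtain u v where e: "e = (u,v)" by (cases e)
  have "0 \<le> (\<Sum>w\<in>nbrs E u - {v}. labp E s z (w, u))" using z labp_nonneg by (intro sum_nonneg) auto
  then show ?thesis using z e Suc by (simp add: divide_le_eq mult_le_cancel_left1 )
qed

lemma frac_anti:
  fixes x y :: "'b \<Rightarrow> real"
  assumes "z \<ge> 0" "\<And>w. w \<in> A \<Longrightarrow> 0 \<le> x w" "\<And>w. w \<in> A \<Longrightarrow> x w \<le> y w"
  shows "z / (1 + sum y A) \<le> z / (1 + sum x A)"
proof -
  have "0 \<le> sum x A" using assms by (simp add: sum_nonneg)
  moreover have "sum x A \<le> sum y A" using assms by (simp add: sum_mono)
  ultimately show ?thesis using assms(1) by (intro divide_left_mono) auto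
qed

lemma labp_S: "labp E (Suc t) z (u,v) = z / (1 + (\<Sum>w\<in>nbrs E u - {v}. labp E t z (w, u)))"
  by (rule labp.simps(2))

declare labp.simps(2)[simp del]

lemma labp_osc: "z \<ge> 0 \<Longrightarrow> (if even t then labp E t z e \<le> labp E (Suc t) z e else labp E (Suc t) z e \<le> labp E t z e)"
proof (induction t arbitrary: e)
  case 0 then show ?case using labp_nonneg labp_le by simp
next
  case (Suc t)
  obtain u v where e: "e = (u,v)" by (cases e)
  show ?case
  proof (cases "even t")
    case True
    then show ?thesis using Suc unfolding e labp_S[of E "Suc t" z u v] labp_S[of E t z u v]
      by (simp, intro frac_anti) (auto simp: labp_nonneg split: if_splits)
  next
    case False
    then show ?thesis using Suc unfolding e labp_S[of E "Suc t" z u v] labp_S[of E t z u v]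
      by (simp, intro frac_anti) (auto simp: labp_nonneg split: if_splits)
  qed
qed

lemma labp_step2: "z \<ge> 0 \<Longrightarrow> (if even t then labp E t z e \<le> labp E (Suc (Suc t)) z e else labp E (Suc (Suc t)) z e \<le> labp E t z e)"
proof (induction t arbitrary: e)
  case 0 then show ?case using labp_nonneg by simp
next
  case (Suc t)
  obtain u v where e: "e = (u,v)" by (cases e)
  show ?case
  proof (cases "even t")
    case True
    then show ?thesis using Suc unfolding e labp_S[of E "Suc (Suc t)" z u v] labp_S[of E t z u v]
      by (simp, intro frac_anti) (auto simp: labp_nonneg split: if_splits)
  next
    case False
    then show ?thesis using Suc unfolding e labp_S[of E "Suc (Suc t)" z u v] labp_S[of E t z u v]
      by (simp, intro frac_anti) (auto simp: labp_nonneg split: if_splits)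
  qed
qed


lemma LIMSEQ_even_odd':
  fixes X :: "nat \<Rightarrow> real"
  assumes ev: "(\<lambda>k. X (2*k)) \<longlonglongrightarrow> L" and od: "(\<lambda>k. X (Suc (2*k))) \<longlonglongrightarrow> L"
  shows "X \<longlonglongrightarrow> L"
proof (rule LIMSEQ_I)
  fix r :: real assume r: "0 < r"
  from LIMSEQ_D[OF ev r] obtain N1 where N1: "\<forall>k\<ge>N1. norm (X (2*k) - L) < r" ..
  from LIMSEQ_D[OF od r] obtain N2 where N2: "\<forall>k\<ge>N2. norm (X (Suc (2*k)) - L) < r" ..
  have "\<forall>n\<ge>2 * max N1 N2. norm (X n - L) < r"
  proof (intro allI impI)
    fix n assume n: "n \<ge> 2 * max N1 N2"
    show "norm (X n - L) < r"
    proof (cases "even n")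
      case True
      then obtain k where k: "n = 2*k" by (rule evenE)
      have "k \<ge> N1" using n k by simp
      then show ?thesis using N1 k by simp
    next
      case False
      then obtain k where k: "n = Suc (2*k)" by (auto elim: oddE)
      have "k \<ge> N2" using n k by simp
      then show ?thesis using N2 k by simp
    qed
  qed
  then show "\<exists>no. \<forall>n\<ge>no. norm (X n - L) < r" ..
qed

definition symE :: "('a \<times> 'a) set \<Rightarrow> bool" where
  "symE E \<longleftrightarrow> (\<forall>u v. (u, v) \<in> E \<longrightarrow> (v, u) \<in> E)"

lemma nbrs_edge: "symE E \<Longrightarrow> w \<in> nbrs E u \<Longrightarrow> (w, u) \<in> E"
  unfolding symE_def nbrs_def by auto

lemma labp_conv:
  assumes fin: "finite E" and sym: "symE E" and z: "z > 0"
  shows "\<forall>e\<in>E. (\<lambda>t. labp E t z e) \<longlonglongrightarrow> Y E z e"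
    and "\<forall>u v. (u,v) \<in> E \<longrightarrow> Y E z (u,v) = z / (1 + (\<Sum>w\<in>nbrs E u - {v}. Y E z (w, u)))"
proof -
  have z0: "z \<ge> 0" using z by simp
  have st1: "labp E (2*k) z e \<le> labp E (Suc (Suc (2*k))) z e" for k e
    using labp_step2[OF z0, where t="2*k" and E=E and e=e] by simp
  have st2: "labp E (Suc (Suc (Suc (2*k)))) z e \<le> labp E (Suc (2*k)) z e" for k e
    using labp_step2[OF z0, where t="Suc (2*k)" and E=E and e=e] by simp
  have osc2: "labp E (2*k) z e \<le> labp E (Suc (2*k)) z e" for k e
    using labp_osc[OF z0, where t="2*k" and E=E and e=e] by simp
  have inc: "incseq (\<lambda>k. labp E (2*k) z e)" for e
    by (rule incseq_SucI) (use st1 in simp)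
  have dec: "decseq (\<lambda>k. labp E (Suc (2*k)) z e)" for e
    by (rule decseq_SucI) (use st2 in simp)
  define lo where "lo e = lim (\<lambda>k. labp E (2*k) z e)" for e
  define hi where "hi e = lim (\<lambda>k. labp E (Suc (2*k)) z e)" for e
  have lo: "(\<lambda>k. labp E (2*k) z e) \<longlonglongrightarrow> lo e" for e
  proof -
    obtain L where "(\<lambda>k. labp E (2*k) z e) \<longlonglongrightarrow> L"
      by (rule incseq_convergent[OF inc[of e], of z]) (intro allI labp_le[OF z0])
    then show ?thesis unfolding lo_def using convergent_LIMSEQ_iff convergentI by blast
  qed
  have hi: "(\<lambda>k. labp E (Suc (2*k)) z e) \<longlonglongrightarrow> hi e" for e
  proof -
    obtain L where "(\<lambda>k. labp E (Suc (2*k)) z e) \<longlonglongrightarrow> L"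
      by (rule decseq_convergent[OF dec[of e], of 0]) (intro allI labp_nonneg[OF z0])
    then show ?thesis unfolding hi_def using convergent_LIMSEQ_iff convergentI by blast
  qed
  have lo_le_hi: "lo e \<le> hi e" for e
    by (rule LIMSEQ_le[OF lo hi]) (use osc2 in blast)
  have hi_nn: "0 \<le> hi e" for e
    by (rule LIMSEQ_le_const[OF hi]) (intro exI allI impI labp_nonneg[OF z0])
  have lo_nn: "0 \<le> lo e" for e
    by (rule LIMSEQ_le_const[OF lo]) (intro exI allI impI labp_nonneg[OF z0])
  have fix_lo: "lo (u,v) = z / (1 + (\<Sum>w\<in>nbrs E u - {v}. hi (w, u)))" for u v
  proof -
    have "(\<lambda>k. labp E (2*Suc k) z (u,v)) \<longlonglongrightarrow> lo (u,v)"
      using LIMSEQ_Suc[OF lo] by simp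
    moreover have "(\<lambda>k. labp E (2*Suc k) z (u,v)) = (\<lambda>k. z / (1 + (\<Sum>w\<in>nbrs E u - {v}. labp E (Suc (2*k)) z (w, u))))"
      by (simp add: labp_S[symmetric])
    moreover have "(\<lambda>k. z / (1 + (\<Sum>w\<in>nbrs E u - {v}. labp E (Suc (2*k)) z (w, u)))) \<longlonglongrightarrow> z / (1 + (\<Sum>w\<in>nbrs E u - {v}. hi (w, u)))"
    proof -
      have "0 \<le> (\<Sum>w\<in>nbrs E u - {v}. hi (w, u))" using hi_nn by (simp add: sum_nonneg)
      then show ?thesis by (intro tendsto_intros hi) auto
    qed
    ultimately show ?thesis using LIMSEQ_unique by auto
  qed
  have fix_hi: "hi (u,v) = z / (1 + (\<Sum>w\<in>nbrs E u - {v}. lo (w, u)))" for u v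
  proof -
    have "(\<lambda>k. labp E (Suc (2*k)) z (u,v)) = (\<lambda>k. z / (1 + (\<Sum>w\<in>nbrs E u - {v}. labp E (2*k) z (w, u))))"
      by (simp add: labp_S)
    moreover have "(\<lambda>k. z / (1 + (\<Sum>w\<in>nbrs E u - {v}. labp E (2*k) z (w, u)))) \<longlonglongrightarrow> z / (1 + (\<Sum>w\<in>nbrs E u - {v}. lo (w, u)))"
    proof -
      have "0 \<le> (\<Sum>w\<in>nbrs E u - {v}. lo (w, u))" using lo_nn by (simp add: sum_nonneg)
      then show ?thesis by (intro tendsto_intros lo) auto
    qed
    ultimately have "(\<lambda>k. labp E (Suc (2*k)) z (u,v)) \<longlonglongrightarrow> z / (1 + (\<Sum>w\<in>nbrs E u - {v}. lo (w, u)))" by simp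
    then show ?thesis using hi[of "(u,v)"] LIMSEQ_unique by blast
  qed
  have lo_pos: "lo e > 0" for e
  proof -
    obtain u v where e: "e = (u,v)" by (cases e)
    have "0 \<le> (\<Sum>w\<in>nbrs E u - {v}. hi (w, u))" using hi_nn by (simp add: sum_nonneg)
    then show ?thesis unfolding e fix_lo using z by simp
  qed
  have eq: "hi e = lo e" if "e \<in> E" for e
  proof -
    define R where "R e = hi e / lo e" for e
    define m where "m = Max (R ` E)"
    have "m \<in> R ` E" unfolding m_def using that fin by (intro Max_in) auto
    then obtain e0 where e0: "e0 \<in> E" "R e0 = m" by blast
    have Rle: "R e \<le> m" if "e \<in> E" for e unfolding m_def using fin that by (intro Max_ge) auto
    obtain a b where ab: "e0 = (a,b)" by (cases e0)
    define A where "A = nbrs E a - {b}"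
    have hle: "hi (w,a) \<le> m * lo (w,a)" if "w \<in> A" for w
    proof -
      have "(w,a) \<in> E" using that nbrs_edge[OF sym] unfolding A_def by blast
      then have "hi (w,a) / lo (w,a) \<le> m" using Rle R_def by auto
      then show ?thesis using lo_pos[of "(w,a)"] by (simp add: divide_le_eq)
    qed
    define Sl where "Sl = (\<Sum>w\<in>A. lo (w,a))"
    define Sh where "Sh = (\<Sum>w\<in>A. hi (w,a))"
    have Sl0: "Sl \<ge> 0" unfolding Sl_def using lo_nn by (simp add: sum_nonneg)
    have Sh0: "Sh \<ge> 0" unfolding Sh_def using hi_nn by (simp add: sum_nonneg)
    have ShSl: "Sh \<le> m * Sl" unfolding Sh_def Sl_def sum_distrib_left using hle by (intro sum_mono) auto
    have hi0: "hi e0 = z / (1 + Sl)" unfolding ab fix_hi Sl_def A_def ..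
    have lo0: "lo e0 = z / (1 + Sh)" unfolding ab fix_lo Sh_def A_def ..
    have "m = (z / (1 + Sl)) / (z / (1 + Sh))" using e0(2) unfolding R_def hi0 lo0 by simp
    also have "\<dots> = (1 + Sh) / (1 + Sl)" using z Sl0 Sh0 by (simp add: divide_simps)
    finally have mm: "m = (1 + Sh) / (1 + Sl)" .
    have "1 + Sl \<noteq> 0" using Sl0 by auto
    then have "m * (1 + Sl) = 1 + Sh" unfolding mm by simp
    then have "m \<le> 1" using ShSl by (simp add: algebra_simps)
    then have "hi e / lo e \<le> 1" using Rle[OF that] R_def by simp
    then have "hi e \<le> lo e" using lo_pos[of e] by (simp add: divide_le_eq)
    then show ?thesis using lo_le_hi[of e] by simp
  qed
  have conv: "(\<lambda>t. labp E t z e) \<longlonglongrightarrow> lo e" if "e \<in> E" for e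
    using LIMSEQ_even_odd'[OF lo] hi[of e] eq[OF that] by simp
  have Ylo: "Y E z e = lo e" if "e \<in> E" for e
    unfolding Y_def using conv[OF that] by (rule limI)
  show "\<forall>e\<in>E. (\<lambda>t. labp E t z e) \<longlonglongrightarrow> Y E z e" using conv Ylo by simp
  show "\<forall>u v. (u,v) \<in> E \<longrightarrow> Y E z (u,v) = z / (1 + (\<Sum>w\<in>nbrs E u - {v}. Y E z (w, u)))"
  proof (intro allI impI)
    fix u v assume uv: "(u,v) \<in> E"
    have "(\<Sum>w\<in>nbrs E u - {v}. hi (w, u)) = (\<Sum>w\<in>nbrs E u - {v}. Y E z (w, u))"
      using nbrs_edge[OF sym] eq Ylo by (intro sum.cong) auto
    then show "Y E z (u,v) = z / (1 + (\<Sum>w\<in>nbrs E u - {v}. Y E z (w, u)))"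
      using Ylo[OF uv] fix_lo by simp
  qed
qed


lemma two_step_mono:
  fixes a a' :: "'b \<Rightarrow> real"
  assumes z: "0 < z" "z \<le> z'" and aa: "\<And>w. w \<in> A \<Longrightarrow> 0 \<le> a w \<and> a w \<le> a' w"
  shows "z / (1 + (\<Sum>w\<in>A. z / (1 + a w))) \<le> z' / (1 + (\<Sum>w\<in>A. z' / (1 + a' w)))"
proof -
  have z': "0 < z'" using z by simp
  have eq: "c / (1 + (\<Sum>w\<in>A. c / (1 + b w))) = 1 / (1 / c + (\<Sum>w\<in>A. 1 / (1 + b w)))"
    if c: "0 < c" and b: "\<And>w. w \<in> A \<Longrightarrow> 0 \<le> b w" for c and b :: "'b \<Rightarrow> real"
  proof -
    have s: "(\<Sum>w\<in>A. c / (1 + b w)) = c * (\<Sum>w\<in>A. 1 / (1 + b w))"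
      by (simp add: sum_distrib_left)
    have "0 \<le> (\<Sum>w\<in>A. 1 / (1 + b w))" using b by (intro sum_nonneg) (simp add: add_nonneg_pos)
    then have "0 < 1 + c * (\<Sum>w\<in>A. 1 / (1 + b w))" using c by (simp add: add_pos_nonneg)
    then show ?thesis unfolding s using c by (simp add: divide_simps mult.commute)
  qed
  have a'0: "\<And>w. w \<in> A \<Longrightarrow> 0 \<le> a' w" using aa by force
  have s1: "(\<Sum>w\<in>A. 1 / (1 + a' w)) \<le> (\<Sum>w\<in>A. 1 / (1 + a w))"
  proof (intro sum_mono)
    fix w assume "w \<in> A"
    then have "0 \<le> a w" "a w \<le> a' w" using aa by auto
    then show "1 / (1 + a' w) \<le> 1 / (1 + a w)" by (intro divide_left_mono) auto
  qed
  have s0: "0 \<le> (\<Sum>w\<in>A. 1 / (1 + a' w))" using a'0 by (intro sum_nonneg) (simp add: add_nonneg_pos)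
  have "1 / z' \<le> 1 / z" using z by (simp add: frac_le)
  then have d: "1 / z' + (\<Sum>w\<in>A. 1 / (1 + a' w)) \<le> 1 / z + (\<Sum>w\<in>A. 1 / (1 + a w))" using s1 by simp
  have p: "0 < 1 / z' + (\<Sum>w\<in>A. 1 / (1 + a' w))" using s0 z' by (simp add: add_pos_nonneg)
  have e1: "z / (1 + (\<Sum>w\<in>A. z / (1 + a w))) = 1 / (1 / z + (\<Sum>w\<in>A. 1 / (1 + a w)))"
    by (rule eq) (use aa z in auto)
  have e2: "z' / (1 + (\<Sum>w\<in>A. z' / (1 + a' w))) = 1 / (1 / z' + (\<Sum>w\<in>A. 1 / (1 + a' w)))"
    by (rule eq) (use a'0 z' in auto)
  show ?thesis unfolding e1 e2
    using d p by (intro divide_left_mono) auto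
qed

lemma labp_even_mono_z:
  assumes z: "0 < z" "z \<le> z'"
  shows "labp E (2*k) z e \<le> labp E (2*k) z' e"
proof (induction k arbitrary: e)
  case 0 then show ?case by simp
next
  case (Suc k)
  obtain u v where e: "e = (u,v)" by (cases e)
  have z0: "0 \<le> z" "0 \<le> z'" using z by auto
  have "labp E (Suc (Suc (2*k))) z (u,v) \<le> labp E (Suc (Suc (2*k))) z' (u,v)"
    unfolding labp_S
    by (rule two_step_mono[OF z]) (auto intro!: sum_nonneg sum_mono simp: labp_nonneg[OF z0(1)] Suc.IH)
  then show ?case using e by simp
qed

lemma Y_props:
  assumes fin: "finite E" and sym: "symE E" and z: "z > 0" and e: "e \<in> E"
  shows "0 < Y E z e" "Y E z e \<le> z"
proof -
  have conv: "(\<lambda>t. labp E t z e) \<longlonglongrightarrow> Y E z e" using labp_conv(1)[OF fin sym z] e by blast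
  have nn: "0 \<le> Y E z w" if "w \<in> E" for w
  proof -
    have c: "(\<lambda>t. labp E t z w) \<longlonglongrightarrow> Y E z w" using labp_conv(1)[OF fin sym z] that by blast
    have "\<forall>n. 0 \<le> labp E n z w" using z by (simp add: labp_nonneg)
    then show ?thesis using LIMSEQ_le_const[OF c] by blast
  qed
  obtain u v where uv: "e = (u,v)" by (cases e)
  have fp: "Y E z (u,v) = z / (1 + (\<Sum>w\<in>nbrs E u - {v}. Y E z (w, u)))"
    using labp_conv(2)[OF fin sym z] e uv by blast
  have s: "0 \<le> (\<Sum>w\<in>nbrs E u - {v}. Y E z (w, u))"
    using nn nbrs_edge[OF sym] by (intro sum_nonneg) auto
  show "0 < Y E z e" unfolding uv fp using s z by simp
  show "Y E z e \<le> z" unfolding uv fp using s z by (simp add: divide_le_eq mult_le_cancel_left1)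
qed

lemma Y_mono:
  assumes fin: "finite E" and sym: "symE E" and z: "0 < z" "z \<le> z'" and e: "e \<in> E"
  shows "Y E z e \<le> Y E z' e"
proof -
  have z': "0 < z'" using z by simp
  have sm: "strict_mono (\<lambda>k::nat. 2*k)" by (simp add: strict_mono_def)
  have c1: "(\<lambda>k. labp E (2*k) z e) \<longlonglongrightarrow> Y E z e"
    using LIMSEQ_subseq_LIMSEQ[OF _ sm] labp_conv(1)[OF fin sym z(1)] e by (auto simp: o_def)
  have c2: "(\<lambda>k. labp E (2*k) z' e) \<longlonglongrightarrow> Y E z' e"
    using LIMSEQ_subseq_LIMSEQ[OF _ sm] labp_conv(1)[OF fin sym z'] e by (auto simp: o_def)
  have "\<forall>n. labp E (2 * n) z e \<le> labp E (2 * n) z' e" using labp_even_mono_z[OF z] by blast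
  then show ?thesis using LIMSEQ_le[OF c1 c2] by blast
qed


definition Tinf :: "('a \<times> 'a) set \<Rightarrow> 'a \<times> 'a \<Rightarrow> bool" where
  "Tinf E e \<longleftrightarrow> filterlim (\<lambda>z. Y E z e) at_top at_top"

lemma Y_bounded:
  assumes fin: "finite E" and sym: "symE E" and e: "e \<in> E" and nT: "\<not> Tinf E e"
  shows "\<exists>C. \<forall>z>0. Y E z e \<le> C"
proof (rule ccontr)
  assume "\<not> (\<exists>C. \<forall>z>0. Y E z e \<le> C)"
  then have H: "\<exists>z>0. C < Y E z e" for C by (auto simp: not_le)
  have "Tinf E e" unfolding Tinf_def filterlim_at_top
  proof
    fix C :: real
    obtain z0 where z0: "z0 > 0" "C < Y E z0 e" using H by blast
    have "\<forall>\<^sub>F z in at_top. z0 \<le> z" by (rule eventually_ge_at_top)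
    then show "\<forall>\<^sub>F z in at_top. C \<le> Y E z e"
    proof (rule eventually_mono)
      fix z assume "z0 \<le> z"
      then have "Y E z0 e \<le> Y E z e" using Y_mono[OF fin sym z0(1) _ e] by blast
      then show "C \<le> Y E z e" using z0 by simp
    qed
  qed
  then show False using nT by simp
qed

lemma Y_lower:
  assumes fin: "finite E" and sym: "symE E" and uv: "(u,v) \<in> E"
    and nT: "\<forall>w\<in>nbrs E u - {v}. \<not> Tinf E (w,u)"
  shows "\<exists>c>0. \<forall>z>0. c * z \<le> Y E z (u,v)"
proof -
  define A where "A = nbrs E u - {v}"
  have finA: "finite A" unfolding A_def using finite_nbrs[OF fin] by simp
  have AE: "(w,u) \<in> E" if "w \<in> A" for w using that nbrs_edge[OF sym] unfolding A_def by blast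
  have "\<forall>w\<in>A. \<exists>C. \<forall>z>0. Y E z (w,u) \<le> C"
    using Y_bounded[OF fin sym AE] nT unfolding A_def by blast
  then obtain Cf where Cf0': "\<forall>w\<in>A. \<forall>z>0. Y E z (w,u) \<le> Cf w" by (rule bchoice[THEN exE])
  then have Cf: "\<And>w z. w \<in> A \<Longrightarrow> z > 0 \<Longrightarrow> Y E z (w,u) \<le> Cf w" by blast
  define K where "K = (\<Sum>w\<in>A. Cf w)"
  have Cf0: "0 \<le> Cf w" if "w \<in> A" for w
    using Y_props(1)[OF fin sym _ AE[OF that], of 1] Cf[OF that, of 1] by simp
  have K0: "0 \<le> K" unfolding K_def using Cf0 by (simp add: sum_nonneg)
  show ?thesis
  proof (intro exI conjI allI impI)
    show "0 < 1 / (1 + K)" using K0 by simp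
    fix z :: real assume z: "0 < z"
    have fp: "Y E z (u,v) = z / (1 + (\<Sum>w\<in>A. Y E z (w, u)))"
      using labp_conv(2)[OF fin sym z] uv unfolding A_def by blast
    have s0: "0 \<le> (\<Sum>w\<in>A. Y E z (w, u))" using Y_props(1)[OF fin sym z AE] by (simp add: sum_nonneg less_imp_le)
    have sK: "(\<Sum>w\<in>A. Y E z (w, u)) \<le> K" unfolding K_def using Cf z by (intro sum_mono) auto
    have "z / (1 + K) \<le> z / (1 + (\<Sum>w\<in>A. Y E z (w, u)))"
      using s0 sK z by (intro divide_left_mono) auto
    then show "1 / (1 + K) * z \<le> Y E z (u, v)" unfolding fp by simp
  qed
qed

lemma Y_small:
  assumes fin: "finite E" and sym: "symE E" and uv: "(u,v) \<in> E"
    and w: "w \<in> nbrs E u - {v}" and T: "Tinf E (w,u)"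
  shows "((\<lambda>z. Y E z (u,v) / z) \<longlongrightarrow> 0) at_top"
proof -
  define A where "A = nbrs E u - {v}"
  have finA: "finite A" unfolding A_def using finite_nbrs[OF fin] by simp
  have AE: "(x,u) \<in> E" if "x \<in> A" for x using that nbrs_edge[OF sym] unfolding A_def by blast
  have lim: "((\<lambda>z. inverse (1 + Y E z (w,u))) \<longlongrightarrow> 0) at_top"
    by (intro tendsto_inverse_0_at_top filterlim_tendsto_add_at_top[OF tendsto_const]) (use T in \<open>simp add: Tinf_def\<close>)
  have ev: "\<forall>\<^sub>F z in at_top. 0 \<le> Y E z (u,v) / z \<and> Y E z (u,v) / z \<le> inverse (1 + Y E z (w,u))"
    using eventually_gt_at_top[of 0]
  proof (rule eventually_mono)
    fix z :: real assume z: "0 < z"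
    have fp: "Y E z (u,v) = z / (1 + (\<Sum>x\<in>A. Y E z (x, u)))"
      using labp_conv(2)[OF fin sym z] uv unfolding A_def by blast
    have pos: "\<And>x. x \<in> A \<Longrightarrow> 0 \<le> Y E z (x, u)" using Y_props(1)[OF fin sym z AE] less_imp_le by blast
    have ge: "Y E z (w,u) \<le> (\<Sum>x\<in>A. Y E z (x, u))"
      using member_le_sum[of w A "\<lambda>x. Y E z (x,u)"] pos w finA unfolding A_def by blast
    have w0: "0 \<le> Y E z (w,u)" using pos w unfolding A_def by blast
    have "Y E z (u,v) / z = 1 / (1 + (\<Sum>x\<in>A. Y E z (x, u)))" unfolding fp using z by simp
    moreover have "1 / (1 + (\<Sum>x\<in>A. Y E z (x, u))) \<le> 1 / (1 + Y E z (w,u))"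
      using ge w0 by (intro divide_left_mono) auto
    moreover have "0 \<le> 1 / (1 + (\<Sum>x\<in>A. Y E z (x, u)))" using ge w0 by simp
    ultimately show "0 \<le> Y E z (u,v) / z \<and> Y E z (u,v) / z \<le> inverse (1 + Y E z (w,u))"
      by (simp add: inverse_eq_divide)
  qed
  show ?thesis
    by (rule tendsto_sandwich[OF _ _ tendsto_const lim]) (use ev in \<open>auto elim: eventually_mono\<close>)
qed

lemma Y_big:
  assumes fin: "finite E" and sym: "symE E" and uv: "(u,v) \<in> E"
    and sm: "\<forall>w\<in>nbrs E u - {v}. ((\<lambda>z. Y E z (w,u) / z) \<longlongrightarrow> 0) at_top"
  shows "Tinf E (u,v)"
proof -
  define A where "A = nbrs E u - {v}"
  have AE: "(x,u) \<in> E" if "x \<in> A" for x using that nbrs_edge[OF sym] unfolding A_def by blast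
  define f where "f z = 1 / z + (\<Sum>x\<in>A. Y E z (x,u) / z)" for z :: real
  have f0: "(f \<longlongrightarrow> 0) at_top" unfolding f_def
  proof -
    have "((\<lambda>z::real. 1 / z) \<longlongrightarrow> 0) at_top"
      using tendsto_inverse_0_at_top[OF filterlim_ident] by (simp add: inverse_eq_divide)
    moreover have "((\<lambda>z. \<Sum>x\<in>A. Y E z (x,u) / z) \<longlongrightarrow> 0) at_top"
      using sm unfolding A_def by (intro tendsto_null_sum) auto
    ultimately show "((\<lambda>z. 1 / z + (\<Sum>x\<in>A. Y E z (x,u) / z)) \<longlongrightarrow> 0) at_top"
      using tendsto_add by fastforce
  qed
  have ev: "\<forall>\<^sub>F z in at_top. 0 < f z \<and> Y E z (u,v) = inverse (f z)"
    using eventually_gt_at_top[of 0]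
  proof (rule eventually_mono)
    fix z :: real assume z: "0 < z"
    have fp: "Y E z (u,v) = z / (1 + (\<Sum>x\<in>A. Y E z (x, u)))"
      using labp_conv(2)[OF fin sym z] uv unfolding A_def by blast
    have s0: "0 \<le> (\<Sum>x\<in>A. Y E z (x, u))" using Y_props(1)[OF fin sym z AE] by (simp add: sum_nonneg less_imp_le)
    have fz: "f z = (1 + (\<Sum>x\<in>A. Y E z (x, u))) / z"
      unfolding f_def by (simp add: sum_divide_distrib[symmetric] add_divide_distrib)
    show "0 < f z \<and> Y E z (u,v) = inverse (f z)" unfolding fz fp using z s0 by simp
  qed
  have "filterlim (\<lambda>z. inverse (f z)) at_top at_top"
    by (rule filterlim_inverse_at_top[OF f0]) (use ev in \<open>auto elim: eventually_mono\<close>)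
  moreover have "\<forall>\<^sub>F z in at_top. inverse (f z) = Y E z (u,v)" using ev by (auto elim: eventually_mono)
  moreover have "filterlim (\<lambda>z. inverse (f z)) at_top at_top = filterlim (\<lambda>z. Y E z (u,v)) at_top at_top"
    by (rule filterlim_cong) (use ev in \<open>auto elim: eventually_mono\<close>)
  ultimately show ?thesis unfolding Tinf_def by simp
qed


lemma bip_facts:
  assumes "bipartite_graph U W E"
  shows "finite E" "symE E" "finite U" "finite W" "U \<inter> W = {}"
    "\<And>u. u \<in> U \<Longrightarrow> nbrs E u \<subseteq> W" "\<And>w. w \<in> W \<Longrightarrow> nbrs E w \<subseteq> U"
    "\<And>a b. (a,b) \<in> E \<Longrightarrow> (a \<in> U \<and> b \<in> W) \<or> (a \<in> W \<and> b \<in> U)"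
proof -
  have sub: "E \<subseteq> (U \<union> W) \<times> (U \<union> W)"
  proof
    fix p assume "p \<in> E"
    moreover obtain a b where "p = (a,b)" by (cases p)
    ultimately show "p \<in> (U \<union> W) \<times> (U \<union> W)" using assms unfolding bipartite_graph_def by blast
  qed
  show "finite U" "finite W" "U \<inter> W = {}" using assms unfolding bipartite_graph_def by auto
  then show "finite E" using sub finite_subset by blast
  show "symE E" using assms unfolding bipartite_graph_def symE_def by blast
  show "\<And>u. u \<in> U \<Longrightarrow> nbrs E u \<subseteq> W" using assms \<open>U \<inter> W = {}\<close> unfolding bipartite_graph_def nbrs_def by blast
  show "\<And>w. w \<in> W \<Longrightarrow> nbrs E w \<subseteq> U" using assms \<open>U \<inter> W = {}\<close> unfolding bipartite_graph_def nbrs_def by blast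
  show "\<And>a b. (a,b) \<in> E \<Longrightarrow> (a \<in> U \<and> b \<in> W) \<or> (a \<in> W \<and> b \<in> U)" using assms unfolding bipartite_graph_def by blast
qed

lemma IY_eq: "IY E e = (if Tinf E e then 1 else 0)"
  unfolding IY_def Tinf_def by simp

lemma PG_eq:
  assumes "finite E"
  shows "PG E (IY E) (a,b) = (if \<forall>x\<in>nbrs E a - {b}. \<not> Tinf E (x,a) then 1 else 0)"
proof -
  have "finite (nbrs E a - {b})" using finite_nbrs[OF assms] by simp
  then show ?thesis unfolding PG_def by (simp add: IY_eq)
qed

lemma PG_le1: "PG E I e \<le> 1" unfolding PG_def by simp

lemma W2:
  assumes fin: "finite E" and s: "2 \<le> (\<Sum>v\<in>nbrs E w. PG E I (v,w))"
  shows "\<exists>v\<in>nbrs E w - {u}. PG E I (v,w) = 1"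
proof (rule ccontr)
  assume "\<not> ?thesis"
  then have z: "\<forall>v\<in>nbrs E w - {u}. PG E I (v,w) = 0" using PG_def by (auto simp: PG_def split: if_splits)
  have fN: "finite (nbrs E w)" using finite_nbrs[OF fin] .
  have "(\<Sum>v\<in>nbrs E w. PG E I (v,w)) \<le> 1"
  proof (cases "u \<in> nbrs E w")
    case True
    have "(\<Sum>v\<in>nbrs E w. PG E I (v,w)) = PG E I (u,w) + (\<Sum>v\<in>nbrs E w - {u}. PG E I (v,w))"
      using sum.remove[OF fN True] by simp
    then show ?thesis using z PG_le1[of E I "(u,w)"] by simp
  next
    case False
    then have "nbrs E w - {u} = nbrs E w" by auto
    then show ?thesis using z by simp
  qed
  then show False using s by simp
qed

lemma cover_aux:
  assumes bip: "bipartite_graph U W E" and u: "u \<in> U" and w: "w \<in> W" and uw: "(u,w) \<in> E"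
  shows "u \<in> Vset U W E (IY E) \<or> w \<in> Vset U W E (IY E)"
proof (rule ccontr)
  note bf = bip_facts[OF bip]
  have fin: "finite E" and sym: "symE E" using bf by auto
  assume "\<not> ?thesis"
  then have nu: "u \<notin> Vset U W E (IY E)" and nw: "w \<notin> Vset U W E (IY E)" by auto
  have fN: "finite (nbrs E x)" for x using finite_nbrs[OF fin] .
  have "(\<Sum>v\<in>nbrs E u. IY E (v,u)) = 0" using nu u unfolding Vset_def by auto
  then have "\<forall>a\<in>nbrs E u. (if Tinf E (a, u) then 1 else 0::nat) = 0" using fN[of u] by (simp add: IY_eq)
  then have nT: "\<forall>v\<in>nbrs E u. \<not> Tinf E (v,u)" by (metis one_neq_zero)
  have wu: "w \<in> nbrs E u" using uw unfolding nbrs_def by simp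
  have uN: "u \<in> nbrs E w" using uw sym unfolding nbrs_def symE_def by blast
  have PGu: "PG E (IY E) (u,w) = 1" using nT by (simp add: PG_eq[OF fin])
  have lt: "(\<Sum>v\<in>nbrs E w. PG E (IY E) (v,w)) < 2" using nw w unfolding Vset_def by auto
  have other: "PG E (IY E) (v,w) = 0" if v: "v \<in> nbrs E w - {u}" for v
  proof (rule ccontr)
    assume "PG E (IY E) (v,w) \<noteq> 0"
    then have "PG E (IY E) (v,w) = 1" using PG_le1[of E "IY E" "(v,w)"] by simp
    then have "1 \<le> (\<Sum>v\<in>nbrs E w - {u}. PG E (IY E) (v,w))"
      using member_le_sum[of v "nbrs E w - {u}" "\<lambda>v. PG E (IY E) (v,w)"] v fN[of w] by simp
    moreover have "(\<Sum>v\<in>nbrs E w. PG E (IY E) (v,w)) = PG E (IY E) (u,w) + (\<Sum>v\<in>nbrs E w - {u}. PG E (IY E) (v,w))"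
      using sum.remove[OF fN uN] by simp
    ultimately show False using lt PGu by simp
  qed
  have small: "\<forall>v\<in>nbrs E w - {u}. ((\<lambda>z. Y E z (v,w) / z) \<longlongrightarrow> 0) at_top"
  proof
    fix v assume v: "v \<in> nbrs E w - {u}"
    have vw: "(v,w) \<in> E" using v nbrs_edge[OF sym] by blast
    have "\<exists>x\<in>nbrs E v - {w}. Tinf E (x,v)" using other[OF v] by (simp add: PG_eq[OF fin] split: if_splits)
    then obtain x where "x \<in> nbrs E v - {w}" "Tinf E (x,v)" by blast
    then show "((\<lambda>z. Y E z (v,w) / z) \<longlongrightarrow> 0) at_top" using Y_small[OF fin sym vw] by blast
  qed
  have wuE: "(w,u) \<in> E" using uN unfolding nbrs_def by simp
  have "Tinf E (w,u)" using Y_big[OF fin sym wuE small] .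
  then show False using nT wu by blast
qed


definition SS :: "('a \<times> 'a) set \<Rightarrow> real \<Rightarrow> 'a \<Rightarrow> real" where
  "SS E z x = (\<Sum>v\<in>nbrs E x. Y E z (v,x))"

definition qq :: "('a \<times> 'a) set \<Rightarrow> real \<Rightarrow> 'a \<Rightarrow> 'a \<Rightarrow> real" where
  "qq E z x y = Y E z (y,x) / (1 + SS E z x)"

lemma SS_nn:
  assumes fin: "finite E" and sym: "symE E" and z: "0 < z"
  shows "0 \<le> SS E z x"
  unfolding SS_def using Y_props(1)[OF fin sym z] nbrs_edge[OF sym]
  by (intro sum_nonneg) (auto intro: less_imp_le)

lemma qq_nn:
  assumes fin: "finite E" and sym: "symE E" and z: "0 < z" and xy: "(x,y) \<in> E"
  shows "0 \<le> qq E z x y"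
proof -
  have "(y,x) \<in> E" using xy sym unfolding symE_def by blast
  then show ?thesis unfolding qq_def using Y_props(1)[OF fin sym z] SS_nn[OF fin sym z, of x]
    by (simp add: less_imp_le)
qed

lemma row_sum:
  assumes fin: "finite E" and sym: "symE E" and z: "0 < z"
  shows "(\<Sum>y\<in>nbrs E x. qq E z x y) = 1 - 1 / (1 + SS E z x)"
proof -
  have p: "1 + SS E z x \<noteq> 0" using SS_nn[OF fin sym z, of x] by simp
  have "(\<Sum>y\<in>nbrs E x. qq E z x y) = SS E z x / (1 + SS E z x)"
    unfolding qq_def sum_divide_distrib[symmetric] SS_def ..
  also have "\<dots> = 1 - 1 / (1 + SS E z x)" using p by (simp add: field_simps)
  finally show ?thesis .
qed

lemma qq_sym:
  assumes fin: "finite E" and sym: "symE E" and z: "0 < z" and xy: "(x,y) \<in> E"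
  shows "qq E z x y = qq E z y x"
proof -
  have yx: "(y,x) \<in> E" using xy sym unfolding symE_def by blast
  have yN: "y \<in> nbrs E x" using xy unfolding nbrs_def by simp
  have xN: "x \<in> nbrs E y" using yx unfolding nbrs_def by simp
  define a where "a = Y E z (x,y)"
  define b where "b = Y E z (y,x)"
  define Sx where "Sx = (\<Sum>w\<in>nbrs E x - {y}. Y E z (w, x))"
  define Sy where "Sy = (\<Sum>w\<in>nbrs E y - {x}. Y E z (w, y))"
  have fa: "a = z / (1 + Sx)" unfolding a_def Sx_def using labp_conv(2)[OF fin sym z] xy by blast
  have fb: "b = z / (1 + Sy)" unfolding b_def Sy_def using labp_conv(2)[OF fin sym z] yx by blast
  have Sx0: "0 \<le> Sx" unfolding Sx_def using Y_props(1)[OF fin sym z] nbrs_edge[OF sym]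
    by (intro sum_nonneg) (auto intro: less_imp_le)
  have Sy0: "0 \<le> Sy" unfolding Sy_def using Y_props(1)[OF fin sym z] nbrs_edge[OF sym]
    by (intro sum_nonneg) (auto intro: less_imp_le)
  have a0: "0 < a" and b0: "0 < b" unfolding a_def b_def using Y_props(1)[OF fin sym z] xy yx by auto
  have SSx: "SS E z x = b + Sx" unfolding SS_def Sx_def b_def using sum.remove[OF finite_nbrs[OF fin] yN] by simp
  have SSy: "SS E z y = a + Sy" unfolding SS_def Sy_def a_def using sum.remove[OF finite_nbrs[OF fin] xN] by simp
  have ea: "a * (1 + Sx) = z" unfolding fa using Sx0 by simp
  have eb: "b * (1 + Sy) = z" unfolding fb using Sy0 by simp
  have "b * (1 + (a + Sy)) = a * (1 + (b + Sx))"
    using ea eb by (simp add: algebra_simps)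
  then have "b / (1 + (b + Sx)) = a / (1 + (a + Sy))"
    using Sx0 Sy0 a0 b0 by (simp add: divide_simps)
  then show ?thesis unfolding qq_def SSx SSy a_def b_def by simp
qed


lemma sum_ind_card: "finite A \<Longrightarrow> (\<Sum>x\<in>A. if x \<in> B then 1 else 0 :: real) = real (card (A \<inter> B))"
proof -
  assume fA: "finite A"
  have "(\<Sum>x\<in>A. if x \<in> B then 1 else 0 :: real) = (\<Sum>x\<in>{x\<in>A. x \<in> B}. 1)"
    using sum.inter_filter[OF fA, of "\<lambda>_. 1::real" "\<lambda>x. x \<in> B"] by simp
  also have "{x\<in>A. x \<in> B} = A \<inter> B" by auto
  finally show ?thesis by simp
qed

lemma SS_big:
  assumes fin: "finite E" and sym: "symE E"
    and h: "filterlim h at_top at_top" and ev: "\<forall>\<^sub>F z in at_top. h z \<le> SS E z x"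
  shows "((\<lambda>z. 1 - 1 / (1 + SS E z x)) \<longlongrightarrow> 1) at_top"
proof -
  have "filterlim (\<lambda>z. SS E z x) at_top at_top" by (rule filterlim_at_top_mono[OF h ev])
  then have "filterlim (\<lambda>z. 1 + SS E z x) at_top at_top"
    by (rule filterlim_tendsto_add_at_top[OF tendsto_const])
  then have "((\<lambda>z. inverse (1 + SS E z x)) \<longlongrightarrow> 0) at_top" by (rule tendsto_inverse_0_at_top)
  then have "((\<lambda>z. 1 - inverse (1 + SS E z x)) \<longlongrightarrow> 1 - 0) at_top" by (intro tendsto_intros)
  then show ?thesis by (simp add: inverse_eq_divide)
qed

lemma inv_SS_0:
  assumes "((\<lambda>z. 1 - 1 / (1 + SS E z x)) \<longlongrightarrow> 1) at_top"
  shows "((\<lambda>z. 1 / (1 + SS E z x)) \<longlongrightarrow> 0) at_top"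
proof -
  have "((\<lambda>z. 1 - (1 - 1 / (1 + SS E z x))) \<longlongrightarrow> 1 - 1) at_top" by (intro tendsto_intros assms)
  then show ?thesis by simp
qed

lemma min_aux:
  assumes bip: "bipartite_graph U W E" and C: "vertex_cover (U \<union> W) E C"
  shows "card (Vset U W E (IY E)) \<le> card C"
proof -
  note bf = bip_facts[OF bip]
  have fin: "finite E" and sym: "symE E" and fU: "finite U" and fW: "finite W" and UW: "U \<inter> W = {}"
    using bf by auto
  define V where "V = Vset U W E (IY E)"
  have fN: "finite (nbrs E x)" for x using finite_nbrs[OF fin] .
  have VUW: "V \<subseteq> U \<union> W" unfolding V_def Vset_def by auto
  have CUW: "C \<subseteq> U \<union> W" and Ccov: "\<And>a b. (a,b) \<in> E \<Longrightarrow> a \<in> C \<or> b \<in> C" using C unfolding vertex_cover_def by auto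
  define g where "g z u w = (if (u,w) \<in> E then qq E z u w else 0)" for z u w
  define M where "M z = (\<Sum>u\<in>U. \<Sum>w\<in>W. g z u w)" for z
  define r where "r z x = 1 / (1 + SS E z x)" for z x
  have g0: "0 \<le> g z u w" if "0 < z" for z u w unfolding g_def using qq_nn[OF fin sym that] by simp
  have rowU: "(\<Sum>w\<in>W. g z u w) = 1 - r z u" if z: "0 < z" and u: "u \<in> U" for z u
  proof -
    have "(\<Sum>w\<in>W. g z u w) = (\<Sum>w\<in>{w\<in>W. (u,w) \<in> E}. qq E z u w)"
      unfolding g_def using sum.inter_filter[OF fW, of "qq E z u" "\<lambda>w. (u,w) \<in> E"] by simp
    also have "{w\<in>W. (u,w) \<in> E} = nbrs E u" using bf(6)[OF u] unfolding nbrs_def by auto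
    finally show ?thesis unfolding r_def using row_sum[OF fin sym z] by simp
  qed
  have colW: "(\<Sum>u\<in>U. g z u w) = 1 - r z w" if z: "0 < z" and w: "w \<in> W" for z w
  proof -
    have "(\<Sum>u\<in>U. g z u w) = (\<Sum>u\<in>{u\<in>U. (u,w) \<in> E}. qq E z u w)"
      unfolding g_def using sum.inter_filter[OF fU, of "\<lambda>u. qq E z u w" "\<lambda>u. (u,w) \<in> E"] by simp
    also have "{u\<in>U. (u,w) \<in> E} = nbrs E w" using bf(7)[OF w] sym unfolding nbrs_def symE_def by auto
    also have "(\<Sum>u\<in>nbrs E w. qq E z u w) = (\<Sum>u\<in>nbrs E w. qq E z w u)"
    proof (rule sum.cong)
      fix u assume "u \<in> nbrs E w"
      then have "(u,w) \<in> E" using nbrs_edge[OF sym] by blast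
      then show "qq E z u w = qq E z w u" using qq_sym[OF fin sym z] by blast
    qed simp
    finally show ?thesis unfolding r_def using row_sum[OF fin sym z] by simp
  qed
  have r0: "0 \<le> r z x" if "0 < z" for z x unfolding r_def using SS_nn[OF fin sym that, of x] by simp
  have upper: "M z \<le> real (card C)" if z: "0 < z" for z
  proof -
    have "M z \<le> (\<Sum>u\<in>U. \<Sum>w\<in>W. (if u \<in> C then g z u w else 0) + (if w \<in> C then g z u w else 0))"
      unfolding M_def
    proof (intro sum_mono)
      fix u w
      show "g z u w \<le> (if u \<in> C then g z u w else 0) + (if w \<in> C then g z u w else 0)"
        using g0[OF z, of u w] Ccov[of u w] unfolding g_def by auto
    qed
    also have "\<dots> = (\<Sum>u\<in>U. if u \<in> C then (\<Sum>w\<in>W. g z u w) else 0) + (\<Sum>w\<in>W. if w \<in> C then (\<Sum>u\<in>U. g z u w) else 0)"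
    proof -
      have e1: "(\<Sum>u\<in>U. \<Sum>w\<in>W. (if u \<in> C then g z u w else 0) + (if w \<in> C then g z u w else 0))
          = (\<Sum>u\<in>U. \<Sum>w\<in>W. (if u \<in> C then g z u w else 0)) + (\<Sum>u\<in>U. \<Sum>w\<in>W. (if w \<in> C then g z u w else 0))"
        by (simp only: sum.distrib)
      have e2: "(\<Sum>u\<in>U. \<Sum>w\<in>W. (if u \<in> C then g z u w else 0)) = (\<Sum>u\<in>U. if u \<in> C then (\<Sum>w\<in>W. g z u w) else 0)"
        by (rule sum.cong) auto
      have e3: "(\<Sum>u\<in>U. \<Sum>w\<in>W. (if w \<in> C then g z u w else 0)) = (\<Sum>w\<in>W. \<Sum>u\<in>U. (if w \<in> C then g z u w else 0))"
        by (rule sum.swap)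
      have e4: "(\<Sum>w\<in>W. \<Sum>u\<in>U. (if w \<in> C then g z u w else 0)) = (\<Sum>w\<in>W. if w \<in> C then (\<Sum>u\<in>U. g z u w) else 0)"
        by (rule sum.cong) auto
      show ?thesis unfolding e1 e2 e3 e4 ..
    qed
    also have "\<dots> \<le> (\<Sum>u\<in>U. if u \<in> C then 1 else 0) + (\<Sum>w\<in>W. if w \<in> C then 1 else 0)"
      using rowU[OF z] colW[OF z] r0[OF z] by (intro add_mono sum_mono) auto
    also have "\<dots> = real (card (U \<inter> C)) + real (card (W \<inter> C))"
      using sum_ind_card[OF fU] sum_ind_card[OF fW] by simp
    also have "\<dots> = real (card C)"
    proof -
      have "C = (U \<inter> C) \<union> (W \<inter> C)" using CUW by auto
      moreover have "finite (U \<inter> C)" "finite (W \<inter> C)" using fU fW by auto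
      moreover have "(U \<inter> C) \<inter> (W \<inter> C) = {}" using UW by auto
      ultimately have "card C = card (U \<inter> C) + card (W \<inter> C)" by (metis card_Un_disjoint)
      then show ?thesis by simp
    qed
    finally show ?thesis .
  qed
  have VU: "\<exists>v\<in>nbrs E u. Tinf E (v,u)" if u: "u \<in> U" "u \<in> V" for u
  proof (rule ccontr)
    assume "\<not> ?thesis"
    then have "(\<Sum>v\<in>nbrs E u. IY E (v,u)) = 0" by (simp add: IY_eq)
    then show False using u unfolding V_def Vset_def using UW by auto
  qed
  have VW: "2 \<le> (\<Sum>v\<in>nbrs E w. PG E (IY E) (v,w))" if w: "w \<in> W" "w \<in> V" for w
    using w UW unfolding V_def Vset_def by auto
  have lower_lin: "\<exists>c>0. \<forall>z>0. c * z \<le> Y E z (v,w)" if "v \<in> nbrs E w" "PG E (IY E) (v,w) = 1" for v w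
  proof -
    have vw: "(v,w) \<in> E" using that nbrs_edge[OF sym] by blast
    have "\<forall>x\<in>nbrs E v - {w}. \<not> Tinf E (x,v)" using that(2) by (simp add: PG_eq[OF fin] split: if_splits)
    then show ?thesis using Y_lower[OF fin sym vw] by blast
  qed
  have SS_ge: "Y E z (v,x) \<le> SS E z x" if "v \<in> nbrs E x" "0 < z" for v x z
  proof -
    have "\<And>y. y \<in> nbrs E x \<Longrightarrow> 0 \<le> Y E z (y,x)"
      using Y_props(1)[OF fin sym \<open>0 < z\<close>] nbrs_edge[OF sym] less_imp_le by blast
    then show ?thesis unfolding SS_def
      using member_le_sum[of v "nbrs E x" "\<lambda>v. Y E z (v,x)"] that fN[of x] by blast
  qed
  have limU: "((\<lambda>z. 1 - r z u) \<longlongrightarrow> 1) at_top" if u: "u \<in> U" "u \<in> V" for u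
  proof -
    obtain v where v: "v \<in> nbrs E u" "Tinf E (v,u)" using VU[OF u] by blast
    have "filterlim (\<lambda>z. Y E z (v,u)) at_top at_top" using v(2) unfolding Tinf_def .
    moreover have "\<forall>\<^sub>F z in at_top. Y E z (v,u) \<le> SS E z u"
      using eventually_gt_at_top[of 0] by (rule eventually_mono) (use SS_ge v(1) in blast)
    ultimately show ?thesis unfolding r_def by (rule SS_big[OF fin sym])
  qed
  have limW: "((\<lambda>z. 1 - r z w) \<longlongrightarrow> 1) at_top" if w: "w \<in> W" "w \<in> V" for w
  proof -
    obtain v where v: "v \<in> nbrs E w - {w}" "PG E (IY E) (v,w) = 1" using W2[OF fin VW[OF w]] by blast
    obtain c where c: "c > 0" "\<forall>z>0. c * z \<le> Y E z (v,w)" using lower_lin v by blast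
    have "filterlim (\<lambda>z. c * z) at_top at_top"
      by (rule filterlim_tendsto_pos_mult_at_top[OF tendsto_const c(1) filterlim_ident])
    moreover have "\<forall>\<^sub>F z in at_top. c * z \<le> SS E z w"
      using eventually_gt_at_top[of 0] by (rule eventually_mono) (use SS_ge v(1) c(2) in \<open>blast intro: order_trans\<close>)
    ultimately show ?thesis unfolding r_def by (rule SS_big[OF fin sym])
  qed
  have limg: "((\<lambda>z. g z u w) \<longlongrightarrow> 0) at_top" if u: "u \<in> U" "u \<in> V" and w: "w \<in> W" "w \<in> V" for u w
  proof (cases "(u,w) \<in> E")
    case False
    then show ?thesis unfolding g_def by simp
  next
    case True
    obtain v where v: "v \<in> nbrs E w - {u}" "PG E (IY E) (v,w) = 1" using W2[OF fin VW[OF w]] by blast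
    obtain c where c: "c > 0" "\<forall>z>0. c * z \<le> Y E z (v,w)" using lower_lin v by blast
    have wu: "(w,u) \<in> E" using True sym unfolding symE_def by blast
    have rz: "((\<lambda>z. r z u) \<longlongrightarrow> 0) at_top" unfolding r_def
      by (rule inv_SS_0) (use limU[OF u] in \<open>simp add: r_def\<close>)
    have bnd: "g z u w \<le> (1 / c) * r z u" if z: "0 < z" for z
    proof -
      define A where "A = nbrs E w - {u}"
      have AE: "(x,w) \<in> E" if "x \<in> A" for x using that nbrs_edge[OF sym] unfolding A_def by blast
      have fp: "Y E z (w,u) = z / (1 + (\<Sum>x\<in>A. Y E z (x, w)))"
        using labp_conv(2)[OF fin sym z] wu unfolding A_def by blast
      have pos: "\<And>x. x \<in> A \<Longrightarrow> 0 \<le> Y E z (x, w)" using Y_props(1)[OF fin sym z AE] less_imp_le by blast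
      have ge: "Y E z (v,w) \<le> (\<Sum>x\<in>A. Y E z (x, w))"
        using member_le_sum[of v A "\<lambda>x. Y E z (x,w)"] pos v fN[of w] unfolding A_def by blast
      have cz: "c * z \<le> (\<Sum>x\<in>A. Y E z (x, w))" using ge c(2) z by force
      have "Y E z (w,u) \<le> z / (1 + c * z)"
      proof -
        have "0 < c * z" using c z by simp
        then have "0 < (1 + (\<Sum>x\<in>A. Y E z (x, w))) * (1 + c * z)" using cz by (intro mult_pos_pos) auto
        then show ?thesis unfolding fp using cz z by (intro divide_left_mono) auto
      qed
      also have "z / (1 + c * z) \<le> 1 / c"
      proof -
        have h: "1 + c * z > 0" using mult_pos_pos[OF c(1) z] by linarith
        have "z \<le> 1 / c * (1 + c * z)" using c(1) by (simp add: algebra_simps)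
        then show ?thesis using pos_divide_le_eq[OF h] by blast
      qed
      finally have Yb: "Y E z (w,u) \<le> 1 / c" .
      have "g z u w = Y E z (w,u) * r z u" unfolding g_def qq_def r_def using True by simp
      also have "\<dots> \<le> (1 / c) * r z u" using Yb r0[OF z] by (intro mult_right_mono) auto
      finally show ?thesis .
    qed
    have "((\<lambda>z. (1 / c) * r z u) \<longlongrightarrow> (1/c) * 0) at_top" by (intro tendsto_intros rz)
    then have up: "((\<lambda>z. (1 / c) * r z u) \<longlongrightarrow> 0) at_top" by simp
    show ?thesis
    proof (rule tendsto_sandwich[OF _ _ tendsto_const up])
      show "\<forall>\<^sub>F n in at_top. 0 \<le> g n u w" using eventually_gt_at_top[of 0] by (rule eventually_mono) (rule g0)
      show "\<forall>\<^sub>F n in at_top. g n u w \<le> 1 / c * r n u" using eventually_gt_at_top[of 0] by (rule eventually_mono) (rule bnd)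
    qed
  qed
  define LB where "LB z = (\<Sum>u\<in>U. if u \<in> V then 1 - r z u else 0) + (\<Sum>w\<in>W. if w \<in> V then 1 - r z w else 0)
      - (\<Sum>u\<in>U. \<Sum>w\<in>W. if u \<in> V \<and> w \<in> V then g z u w else 0)" for z
  have LB_le: "LB z \<le> M z" if z: "0 < z" for z
  proof -
    have "(\<Sum>u\<in>U. \<Sum>w\<in>W. (if u \<in> V then g z u w else 0) + (if w \<in> V then g z u w else 0) - (if u \<in> V \<and> w \<in> V then g z u w else 0)) \<le> M z"
      unfolding M_def using g0[OF z] by (intro sum_mono) auto
    moreover have "(\<Sum>u\<in>U. \<Sum>w\<in>W. (if u \<in> V then g z u w else 0) + (if w \<in> V then g z u w else 0) - (if u \<in> V \<and> w \<in> V then g z u w else 0))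
       = (\<Sum>u\<in>U. \<Sum>w\<in>W. (if u \<in> V then g z u w else 0)) + (\<Sum>u\<in>U. \<Sum>w\<in>W. (if w \<in> V then g z u w else 0)) - (\<Sum>u\<in>U. \<Sum>w\<in>W. if u \<in> V \<and> w \<in> V then g z u w else 0)"
      by (simp only: sum.distrib sum_subtractf)
    moreover have "(\<Sum>u\<in>U. \<Sum>w\<in>W. (if u \<in> V then g z u w else 0)) = (\<Sum>u\<in>U. if u \<in> V then 1 - r z u else 0)"
      using rowU[OF z] by (intro sum.cong) auto
    moreover have "(\<Sum>u\<in>U. \<Sum>w\<in>W. (if w \<in> V then g z u w else 0)) = (\<Sum>w\<in>W. \<Sum>u\<in>U. (if w \<in> V then g z u w else 0))"
      by (rule sum.swap)
    moreover have "(\<Sum>w\<in>W. \<Sum>u\<in>U. (if w \<in> V then g z u w else 0)) = (\<Sum>w\<in>W. if w \<in> V then 1 - r z w else 0)"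
      using colW[OF z] by (intro sum.cong) auto
    ultimately show ?thesis unfolding LB_def by simp
  qed
  have LB_lim: "(LB \<longlongrightarrow> real (card (U \<inter> V)) + real (card (W \<inter> V)) - 0) at_top"
  proof -
    have t1: "((\<lambda>z. \<Sum>u\<in>U. if u \<in> V then 1 - r z u else 0) \<longlongrightarrow> (\<Sum>u\<in>U. if u \<in> V then 1 else 0)) at_top"
    proof (rule tendsto_sum)
      fix u assume "u \<in> U"
      then show "((\<lambda>z. if u \<in> V then 1 - r z u else 0) \<longlongrightarrow> (if u \<in> V then 1 else 0)) at_top"
        using limU by (cases "u \<in> V") auto
    qed
    have t2: "((\<lambda>z. \<Sum>w\<in>W. if w \<in> V then 1 - r z w else 0) \<longlongrightarrow> (\<Sum>w\<in>W. if w \<in> V then 1 else 0)) at_top"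
    proof (rule tendsto_sum)
      fix w assume "w \<in> W"
      then show "((\<lambda>z. if w \<in> V then 1 - r z w else 0) \<longlongrightarrow> (if w \<in> V then 1 else 0)) at_top"
        using limW by (cases "w \<in> V") auto
    qed
    have t3: "((\<lambda>z. \<Sum>u\<in>U. \<Sum>w\<in>W. if u \<in> V \<and> w \<in> V then g z u w else 0) \<longlongrightarrow> 0) at_top"
    proof (intro tendsto_null_sum)
      fix u w assume "u \<in> U" "w \<in> W"
      then show "((\<lambda>z. if u \<in> V \<and> w \<in> V then g z u w else 0) \<longlongrightarrow> 0) at_top"
        using limg by (cases "u \<in> V \<and> w \<in> V") auto
    qed
    have "(LB \<longlongrightarrow> (\<Sum>u\<in>U. if u \<in> V then 1 else 0) + (\<Sum>w\<in>W. if w \<in> V then 1 else 0) - 0) at_top"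
      unfolding LB_def[abs_def] by (intro tendsto_intros t1 t2 t3)
    then show ?thesis using sum_ind_card[OF fU, of V] sum_ind_card[OF fW, of V] by simp
  qed
  have "real (card (U \<inter> V)) + real (card (W \<inter> V)) - 0 \<le> real (card C)"
  proof (rule tendsto_upperbound[OF LB_lim])
    show "\<forall>\<^sub>F z in at_top. LB z \<le> real (card C)"
      using eventually_gt_at_top[of 0] by (rule eventually_mono) (use LB_le upper in \<open>blast intro: order_trans\<close>)
  qed simp
  moreover have "card V = card (U \<inter> V) + card (W \<inter> V)"
  proof -
    have "V = (U \<inter> V) \<union> (W \<inter> V)" using VUW by auto
    moreover have "finite (U \<inter> V)" "finite (W \<inter> V)" using fU fW by auto
    moreover have "(U \<inter> V) \<inter> (W \<inter> V) = {}" using UW by auto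
    ultimately show ?thesis by (metis card_Un_disjoint)
  qed
  ultimately show ?thesis unfolding V_def by simp
qed

theorem proposition2:
  fixes U W :: "'a set" and E :: "('a \<times> 'a) set"
  assumes "bipartite_graph U W E"
  shows "min_vertex_cover (U \<union> W) E (Vset U W E (IY E))"
proof -
  note bf = bip_facts[OF assms]
  have vc: "vertex_cover (U \<union> W) E (Vset U W E (IY E))"
    unfolding vertex_cover_def
  proof (intro conjI allI impI)
    show "Vset U W E (IY E) \<subseteq> U \<union> W" unfolding Vset_def by auto
    fix a b assume ab: "(a,b) \<in> E"
    show "a \<in> Vset U W E (IY E) \<or> b \<in> Vset U W E (IY E)"
    proof (cases "a \<in> U \<and> b \<in> W")
      case True
      then show ?thesis using cover_aux[OF assms _ _ ab] by blast
    next
      case False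
      then have "a \<in> W" "b \<in> U" using bf(8)[OF ab] by auto
      moreover have "(b,a) \<in> E" using ab bf(2) unfolding symE_def by blast
      ultimately show ?thesis using cover_aux[OF assms, of b a] by blast
    qed
  qed
  show ?thesis unfolding min_vertex_cover_def using vc min_aux[OF assms] by blast
qed

end
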